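(* Let $\varepsilon_n\downarrow0$. For each $n$ let $\mu_n$ be a QSD for $p^{\varepsilon_n}$ with eigenvalue $\lambda_n$. Suppose $\mu_n\to\mu$ weakly as Borel probability measures on $M$. Then: (a) $\liminf_{n}\lambda_n\ge\mu(M_1)$. In particular, if $\mu(M_1)=1$ then $\lambda_n\to1$, and if $\lambda_n\to0$ then $\mu(M_0)=1$. (b) Suppose there is an attractor $A\subset M_1$ such that $\mu_n(U)>0$ for every $n$ and every open neighborhood $U$ of $A$. Then there exists $\delta>0$ such that $\lambda_n\ge1-\beta_\delta(\varepsilon_n)$ for all $n$. (b') Suppose, in addition to the assumption of (b) with $\delta$ as in its conclusion, that some open neighborhood $V_0$ of $M_0$ satisfies $\lim_{n\to\infty}\beta_\delta(\varepsilon_n)/\inf_{x\in V_0}p^{\varepsilon_n}(x,M_0)=0$. Then $\mu(V_0)=0$.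
   Context: Setting. Let $M\subset\mathbb{R}^d$ be closed; all topological notions are relative to $M$. Let $F:M\to M$ be continuous with $\|F\|:=\sup_{x\in M}\|F(x)\|<\infty$. For $A\subset M$ and $\delta>0$, put $N^\delta(A)=\{x\in M:\inf_{y\in A}\|x-y\|<\delta\}$. Let $\{X^\varepsilon\}_{\varepsilon>0}$ be a family of time-homogeneous Markov chains on $M$ with transition kernels $p^\varepsilon(x,\Gamma)$. The following standing hypotheses are assumed. (SH1) For every $\delta>0$, $\beta_\delta(\varepsilon):=\sup_{x\in M}p^\varepsilon(x,M\setminus N^\delta(F(x)))\to0$ as $\varepsilon\to0$. (SH2) $M=M_0\cup M_1$ (disjoint), where $M_0$ is closed, $F(M_0)\subseteq M_0$, $F(M_1)\subseteq M_1$, and $p^\varepsilon(x,M_1)=0$ for all $\varepsilon>0$ and $x\in M_0$. QSD. A Borel probability measure $\mu_\varepsilon$ on $M_1$ is a quasi-stationary distribution (QSD) for $p^\varepsilon$ if there is $\lambda_\varepsilon\in(0,1)$ with $\int_{M_1}p^\varepsilon(x,\Gamma)\,\mu_\varepsilon(dx)=\lambda_\varepsilon\mu_\varepsilon(\Gamma)$ for all Borel $\Gamma\subset M_1$. The number $\lambda_\varepsilon$ is its eigenvalue. Attractor. A compact set $A$ is an attractor for $F$ if there is an open neighborhood $U$ of $A$ with $\bigcap_{n\ge1}F^n(U)=A$ and such that for every open $V\supset A$ there is $n(V)$ with $F^n(U)\subset V$ for all $n\ge n(V)$. *)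

theory Defs
  imports "HOL-Probability.Probability"
begin

definition nbhd :: "'a::metric_space set \<Rightarrow> real \<Rightarrow> 'a set \<Rightarrow> 'a set" where
  "nbhd M \<delta> A = {x \<in> M. \<exists>y\<in>A. dist x y < \<delta>}"

text \<open>beta_delta(eps) = sup over x in M of p^eps(x, M minus N^delta(F x)).
  The kernel family is K :: real => 'a => 'a measure, p^eps(x,G) = measure (K eps x) G.\<close>
definition beta :: "'a::metric_space set \<Rightarrow> ('a \<Rightarrow> 'a) \<Rightarrow> (real \<Rightarrow> 'a \<Rightarrow> 'a measure)
    \<Rightarrow> real \<Rightarrow> real \<Rightarrow> real" where
  "beta M F K \<delta> \<epsilon> = (SUP x\<in>M. measure (K \<epsilon> x) (M - nbhd M \<delta> {F x}))"

definition QSD :: "'a::topological_space set \<Rightarrow> 'a set \<Rightarrow> ('a \<Rightarrow> 'a measure) \<Rightarrow> 'a measure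
    \<Rightarrow> real \<Rightarrow> bool" where
  "QSD M M1 P \<mu> lam \<longleftrightarrow>
     prob_space \<mu> \<and> sets \<mu> = sets (restrict_space borel M) \<and> measure \<mu> M1 = 1 \<and>
     0 < lam \<and> lam < 1 \<and>
     (\<forall>\<Gamma> \<in> sets (restrict_space borel M). \<Gamma> \<subseteq> M1 \<longrightarrow>
        (LINT x:M1|\<mu>. measure (P x) \<Gamma>) = lam * measure \<mu> \<Gamma>)"

definition weak_conv_on :: "'a::topological_space set \<Rightarrow> (nat \<Rightarrow> 'a measure) \<Rightarrow> 'a measure \<Rightarrow> bool" where
  "weak_conv_on M \<mu>s \<mu> \<longleftrightarrow>
     (\<forall>f::'a \<Rightarrow> real. continuous_on M f \<and> bounded (f ` M) \<longrightarrow>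
        (\<lambda>n. integral\<^sup>L (\<mu>s n) f) \<longlonglongrightarrow> integral\<^sup>L \<mu> f)"

definition attractor :: "'a::metric_space set \<Rightarrow> ('a \<Rightarrow> 'a) \<Rightarrow> 'a set \<Rightarrow> bool" where
  "attractor M F A \<longleftrightarrow> compact A \<and> A \<subseteq> M \<and>
     (\<exists>U. openin (top_of_set M) U \<and> A \<subseteq> U \<and>
          (\<Inter>n\<in>{1..}. (F ^^ n) ` U) = A \<and>
          (\<forall>V. openin (top_of_set M) V \<and> A \<subseteq> V \<longrightarrow>
               (\<exists>N. \<forall>n\<ge>N. (F ^^ n) ` U \<subseteq> V)))"

end

theory Submission
  imports Defs
begin

lemma set_integral_lower:
  fixes \<nu> :: "'a measure" and g :: "'a \<Rightarrow> real"
  assumes fm: "finite_measure \<nu>" and gm: "g \<in> borel_measurable \<nu>"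
    and gb: "\<And>x. x \<in> space \<nu> \<Longrightarrow> 0 \<le> g x \<and> g x \<le> 1"
    and T: "T \<in> sets \<nu>" and S: "S \<in> sets \<nu>" and ST: "S \<subseteq> T"
    and c: "\<And>x. x \<in> S \<Longrightarrow> c \<le> g x"
  shows "c * measure \<nu> S \<le> (LINT x:T|\<nu>. g x)"
proof -
  interpret finite_measure \<nu> by (rule fm)
  have i1: "integrable \<nu> (\<lambda>x. indicator S x * c)"
    using S by (intro integrable_const_bound[where B="\<bar>c\<bar>"]) (auto simp: indicator_def)
  have i2: "integrable \<nu> (\<lambda>x. indicator T x *\<^sub>R g x)"
  proof (rule integrable_const_bound[where B=1])
    show "(\<lambda>x. indicator T x *\<^sub>R g x) \<in> borel_measurable \<nu>"
      using T gm by (intro borel_measurable_scaleR borel_measurable_indicator) auto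
    show "AE x in \<nu>. norm (indicator T x *\<^sub>R g x) \<le> 1"
      using gb by (auto simp: indicator_def)
  qed
  have "c * measure \<nu> S = (\<integral>x. indicator S x * c \<partial>\<nu>)"
    using sets.sets_into_space[OF S] by (simp add: Int_absorb2)
  also have "\<dots> \<le> (\<integral>x. indicator T x *\<^sub>R g x \<partial>\<nu>)"
  proof (rule integral_mono[OF i1 i2])
    fix x assume x: "x \<in> space \<nu>"
    show "indicator S x * c \<le> indicator T x *\<^sub>R g x"
      using c[of x] gb[OF x] ST by (auto simp: indicator_def)
  qed
  finally show ?thesis by (simp add: set_lebesgue_integral_def)
qed

lemma portmanteau_open:
  fixes M :: "'a::metric_space set"
  assumes Mc: "closed M" and weak: "weak_conv_on M \<mu>s \<mu>"
    and ps: "\<And>n. prob_space (\<mu>s n)" and ss: "\<And>n. sets (\<mu>s n) = sets (restrict_space borel M)"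
    and p: "prob_space \<mu>" and s: "sets \<mu> = sets (restrict_space borel M)"
    and G: "openin (top_of_set M) G" and e: "e > 0"
  shows "eventually (\<lambda>n. measure \<mu> G - e < measure (\<mu>s n) G) sequentially"
proof -
  have spn: "space (\<mu>s n) = M" for n
    using sets_eq_imp_space_eq[OF ss[of n]] by (simp add: space_restrict_space)
  have bm: "borel_measurable \<mu> = borel_measurable (restrict_space borel M)"
    by (rule measurable_cong_sets[OF s refl])
  have bmn: "borel_measurable (\<mu>s n) = borel_measurable (restrict_space borel M)" for n
    by (rule measurable_cong_sets[OF ss refl])
  have sp: "space \<mu> = M"
    using sets_eq_imp_space_eq[OF s] by (simp add: space_restrict_space)
  obtain Og where O: "open Og" "G = M \<inter> Og" using G by (auto simp: openin_open)
  have Gs: "G \<in> sets (restrict_space borel M)"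
    using O by (auto simp: sets_restrict_space)
  show ?thesis
  proof (cases "M - G = {}")
    case True
    then have "G = M" using O by auto
    then have "measure (\<mu>s n) G = 1" "measure \<mu> G = 1" for n
      using prob_space.prob_space[OF ps[of n]] prob_space.prob_space[OF p] spn sp by auto
    then show ?thesis using e by auto
  next
    case False
    define D where "D = M - G"
    have Dc: "closed D" proof -
      have "D = M \<inter> (- Og)" using O D_def by auto
      then show ?thesis using O Mc by (simp add: closed_Int open_closed)
    qed
    define f where "f k x = min 1 (real k * infdist x D)" for k :: nat and x
    have fcont: "continuous_on UNIV (f k)" for k
      unfolding f_def by (intro continuous_intros)
    have fb: "0 \<le> f k x \<and> f k x \<le> 1" for k x
      unfolding f_def by (auto simp: infdist_nonneg)
    have fmeas: "f k \<in> borel_measurable (restrict_space borel M)" for k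
      by (intro measurable_restrict_space1 borel_measurable_continuous_onI fcont)
    have fle: "f k x \<le> indicator G x" if "x \<in> M" for k x
    proof (cases "x \<in> G")
      case True then show ?thesis using fb[of k x] by simp
    next
      case False then have "x \<in> D" using that D_def by auto
      then show ?thesis by (simp add: f_def)
    qed
    have lim: "(\<lambda>k. f k x) \<longlonglongrightarrow> indicator G x" if "x \<in> M" for x
    proof (cases "x \<in> G")
      case True
      then have "x \<notin> D" by (simp add: D_def)
      then have pos: "infdist x D > 0"
        using infdist_pos_not_in_closed[OF Dc] False D_def by auto
      obtain N :: nat where N: "1 / infdist x D < N" using reals_Archimedean2 by blast
      have "eventually (\<lambda>k. f k x = 1) sequentially"
        unfolding eventually_sequentially
      proof (intro exI allI impI)
        fix k assume "N \<le> k"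
        then have "1 / infdist x D < real k" using N by linarith
        then have "1 < real k * infdist x D" using pos by (simp add: field_simps)
        then show "f k x = 1" by (simp add: f_def)
      qed
      then show ?thesis using True by (simp add: tendsto_eventually)
    next
      case False then have "x \<in> D" using that D_def by auto
      then show ?thesis using False by (simp add: f_def)
    qed
    have "(\<lambda>k. integral\<^sup>L \<mu> (f k)) \<longlonglongrightarrow> integral\<^sup>L \<mu> (indicator G)"
    proof (rule integral_dominated_convergence[where w="\<lambda>_. 1"])
      show "indicator G \<in> borel_measurable \<mu>"
        unfolding bm using Gs by (rule borel_measurable_indicator)
      show "f k \<in> borel_measurable \<mu>" for k
        unfolding bm by (rule fmeas)
      show "integrable \<mu> (\<lambda>_. 1)"
        using prob_space.finite_measure[OF p] by (rule finite_measure.integrable_const)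
      show "AE x in \<mu>. (\<lambda>k. f k x) \<longlonglongrightarrow> indicator G x"
        using lim sp by (intro AE_I2) simp
      show "AE x in \<mu>. norm (f k x) \<le> 1" for k
        using fb by (intro AE_I2) simp
    qed
    moreover have "integral\<^sup>L \<mu> (indicator G) = measure \<mu> G"
      using sp O by (simp add: Int_absorb2)
    ultimately have "eventually (\<lambda>k. measure \<mu> G - e/2 < integral\<^sup>L \<mu> (f k)) sequentially"
      using e by (intro order_tendstoD(1)) auto
    then obtain k where k: "measure \<mu> G - e/2 < integral\<^sup>L \<mu> (f k)"
      using eventually_sequentially by auto
    have "continuous_on M (f k)" using fcont continuous_on_subset by blast
    moreover have "bounded (f k ` M)"
      using fb by (intro boundedI[where B=1]) auto
    ultimately have "(\<lambda>n. integral\<^sup>L (\<mu>s n) (f k)) \<longlonglongrightarrow> integral\<^sup>L \<mu> (f k)"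
      using weak unfolding weak_conv_on_def by blast
    then have ev: "eventually (\<lambda>n. integral\<^sup>L \<mu> (f k) - e/2 < integral\<^sup>L (\<mu>s n) (f k)) sequentially"
      using e by (auto dest!: order_tendstoD(1)[where a="integral\<^sup>L \<mu> (f k) - e/2"])
    have le: "integral\<^sup>L (\<mu>s n) (f k) \<le> measure (\<mu>s n) G" for n
    proof -
      interpret pn: prob_space "\<mu>s n" by (rule ps)
      have "integral\<^sup>L (\<mu>s n) (f k) \<le> integral\<^sup>L (\<mu>s n) (indicator G)"
      proof (rule integral_mono)
        show "integrable (\<mu>s n) (f k)"
        proof (rule pn.integrable_const_bound[where B=1])
          show "f k \<in> borel_measurable (\<mu>s n)" unfolding bmn by (rule fmeas)
        qed (use fb in \<open>intro AE_I2, simp\<close>)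
        show "integrable (\<mu>s n) (indicator G :: _ \<Rightarrow> real)"
                    using Gs ss[of n] by (intro integrable_real_indicator) (auto simp: less_top[symmetric])
        show "f k x \<le> indicator G x" if "x \<in> space (\<mu>s n)" for x
          using fle that spn by auto
      qed
      also have "\<dots> = measure (\<mu>s n) G" using spn O by (simp add: Int_absorb2)
      finally show ?thesis .
    qed
    show ?thesis
      using ev
    proof eventually_elim
      case (elim n)
      then show ?case using k le[of n] by linarith
    qed
  qed
qed

definition chn :: "'a::metric_space set \<Rightarrow> ('a \<Rightarrow> 'a) \<Rightarrow> real \<Rightarrow> nat \<Rightarrow> (nat \<Rightarrow> 'a) \<Rightarrow> bool" where
  "chn M F \<eta> m x \<longleftrightarrow> (\<forall>i<m. x (Suc i) \<in> M \<and> dist (x (Suc i)) (F (x i)) < \<eta>)"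

lemma compact_infdist_le:
  fixes M A :: "'a::euclidean_space set"
  assumes Mc: "closed M" and cA: "compact A" and Ane: "A \<noteq> {}"
  shows "compact {x\<in>M. infdist x A \<le> r}"
proof -
  have "closed {x. infdist x A \<le> r}"
    by (intro closed_Collect_le continuous_on_infdist continuous_on_id continuous_on_const)
  then have cl: "closed {x\<in>M. infdist x A \<le> r}"
    using Mc by (simp add: Collect_conj_eq closed_Int)
  obtain B where B: "\<And>a. a \<in> A \<Longrightarrow> norm a \<le> B"
    using compact_imp_bounded[OF cA] by (auto simp: bounded_iff)
  have "bounded {x\<in>M. infdist x A \<le> r}"
    unfolding bounded_iff
  proof (intro exI ballI)
    fix x assume x: "x \<in> {x\<in>M. infdist x A \<le> r}"
    obtain a where a: "a \<in> A" "infdist x A = dist x a"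
      using infdist_attains_inf[OF compact_imp_closed[OF cA] Ane] by blast
    have "norm x \<le> norm a + dist x a"
      by (metis dist_norm norm_triangle_sub add.commute)
    then show "norm x \<le> B + r" using B[OF a(1)] a x by auto
  qed
  then show ?thesis using cl by (simp add: compact_eq_bounded_closed)
qed

lemma chain_dev:
  fixes F :: "'a::metric_space \<Rightarrow> 'a"
  assumes uc: "uniformly_continuous_on {x\<in>M. infdist x C \<le> 1} F" and CM: "C \<subseteq> M"
  shows "0 < \<epsilon> \<Longrightarrow> \<epsilon> \<le> 1 \<Longrightarrow> \<exists>\<eta>>0. \<forall>x. x 0 \<in> M \<longrightarrow> (\<forall>j\<le>k. (F^^j) (x 0) \<in> C) \<longrightarrow>
     (\<forall>j\<le>k. chn M F \<eta> j x \<longrightarrow> dist (x j) ((F^^j) (x 0)) < \<epsilon>)"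
proof (induction k arbitrary: \<epsilon>)
  case 0
  show ?case using 0 by (intro exI[of _ 1]) auto
next
  case (Suc k)
  obtain \<rho> where \<rho>: "\<rho> > 0" "\<forall>x\<in>{x\<in>M. infdist x C \<le> 1}. \<forall>x'\<in>{x\<in>M. infdist x C \<le> 1}.
      dist x' x < \<rho> \<longrightarrow> dist (F x') (F x) < \<epsilon>/2"
    using uc Suc.prems unfolding uniformly_continuous_on_def by (meson half_gt_zero)
  define \<epsilon>' where "\<epsilon>' = min \<rho> \<epsilon>"
  have "0 < \<epsilon>'" "\<epsilon>' \<le> 1" using \<rho> Suc.prems by (auto simp: \<epsilon>'_def)
  from Suc.IH[OF this] obtain \<eta>' where \<eta>': "\<eta>' > 0" "\<forall>x. x 0 \<in> M \<longrightarrow> (\<forall>j\<le>k. (F^^j) (x 0) \<in> C) \<longrightarrow>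
     (\<forall>j\<le>k. chn M F \<eta>' j x \<longrightarrow> dist (x j) ((F^^j) (x 0)) < \<epsilon>')" by blast
  define \<eta> where "\<eta> = min \<eta>' (\<epsilon>/2)"
  show ?case
  proof (intro exI[of _ \<eta>] conjI allI impI)
    show "\<eta> > 0" using \<eta>' Suc.prems by (simp add: \<eta>_def)
    fix x j assume x0: "x 0 \<in> M" and orb: "\<forall>j\<le>Suc k. (F^^j) (x 0) \<in> C" and j: "j \<le> Suc k"
      and ch: "chn M F \<eta> j x"
    have orbk: "\<forall>j\<le>k. (F^^j) (x 0) \<in> C" using orb by auto
    have IH: "\<forall>j\<le>k. chn M F \<eta>' j x \<longrightarrow> dist (x j) ((F^^j) (x 0)) < \<epsilon>'"
      using \<eta>'(2) x0 orbk by blast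
    show "dist (x j) ((F^^j) (x 0)) < \<epsilon>"
    proof (cases "j \<le> k")
      case True
      have "chn M F \<eta>' j x" using ch by (auto simp: chn_def \<eta>_def)
      then have "dist (x j) ((F^^j) (x 0)) < \<epsilon>'" using IH True by auto
      then show ?thesis by (simp add: \<epsilon>'_def)
    next
      case False
      then have jk: "j = Suc k" using j by simp
      have chk: "chn M F \<eta>' k x" using ch jk by (auto simp: chn_def \<eta>_def)
      have d: "dist (x k) ((F^^k) (x 0)) < \<epsilon>'" using IH chk by auto
      have xkM: "x k \<in> M"
      proof (cases k)
        case 0 then show ?thesis using x0 by simp
      next
        case (Suc k') then show ?thesis using ch jk by (auto simp: chn_def)
      qed
      have ck: "(F^^k) (x 0) \<in> C" using orb by auto
      have "infdist (x k) C \<le> dist (x k) ((F^^k) (x 0))" by (rule infdist_le[OF ck])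
      then have xkC': "x k \<in> {x\<in>M. infdist x C \<le> 1}" using d \<open>\<epsilon>' \<le> 1\<close> xkM by auto
      have ckC': "(F^^k) (x 0) \<in> {x\<in>M. infdist x C \<le> 1}" using ck CM by auto
      have d1: "dist (F (x k)) (F ((F^^k) (x 0))) < \<epsilon>/2"
        using \<rho>(2) xkC' ckC' d by (auto simp: \<epsilon>'_def)
      have d2: "dist (x (Suc k)) (F (x k)) < \<epsilon>/2"
        using ch jk by (auto simp: chn_def \<eta>_def)
      have "dist (x (Suc k)) ((F^^Suc k) (x 0)) \<le> dist (x (Suc k)) (F (x k)) + dist (F (x k)) (F ((F^^k) (x 0)))"
        by (simp add: dist_triangle)
      then show ?thesis using d1 d2 jk by simp
    qed
  qed
qed

lemma funpow_props:
  assumes Fc: "continuous_on M F" and FM: "F ` M \<subseteq> M"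
  shows "continuous_on M (F^^j) \<and> (F^^j) ` M \<subseteq> M"
proof (induction j)
  case 0 then show ?case by (simp add: continuous_on_id)
next
  case (Suc j)
  then have "continuous_on M (F \<circ> (F^^j))"
    by (intro continuous_on_compose continuous_on_subset[OF Fc]) auto
  moreover have "(F \<circ> (F^^j)) ` M \<subseteq> M" using Suc FM by (auto simp: image_subset_iff)
  ultimately show ?case by (simp only: funpow.simps)
qed

lemma funpow_inv:
  assumes "F ` S \<subseteq> S" shows "(F^^j) ` S \<subseteq> S"
  by (induction j) (use assms in auto)

lemma trapping:
  fixes M :: "'a::euclidean_space set" and F :: "'a \<Rightarrow> 'a"
  assumes Mc: "closed M" and Fc: "continuous_on M F" and FM: "F ` M \<subseteq> M"
    and M1o: "openin (top_of_set M) M1" and FM1: "F ` M1 \<subseteq> M1"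
    and att: "attractor M F A" and AM1: "A \<subseteq> M1" and Ane: "A \<noteq> {}"
  shows "\<exists>\<eta>>0. \<exists>W. openin (top_of_set M) W \<and> A \<subseteq> W \<and> W \<subseteq> M1 \<and>
            (\<forall>x\<in>W. \<forall>y\<in>M. dist y (F x) < \<eta> \<longrightarrow> y \<in> W)"
proof -
  obtain U where cA: "compact A" and AM: "A \<subseteq> M" and Uo: "openin (top_of_set M) U"
    and AU: "A \<subseteq> U"
    and conv: "\<And>V. openin (top_of_set M) V \<Longrightarrow> A \<subseteq> V \<Longrightarrow> \<exists>N. \<forall>n\<ge>N. (F^^n) ` U \<subseteq> V"
  proof -
    from att have cA: "compact A" and AM: "A \<subseteq> M" and ex: "\<exists>U. openin (top_of_set M) U \<and> A \<subseteq> U \<and>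
          (\<Inter>n\<in>{1..}. (F ^^ n) ` U) = A \<and>
          (\<forall>V. openin (top_of_set M) V \<and> A \<subseteq> V \<longrightarrow> (\<exists>N. \<forall>n\<ge>N. (F ^^ n) ` U \<subseteq> V))"
      unfolding attractor_def by auto
    from ex obtain U where u1: "openin (top_of_set M) U" and u2: "A \<subseteq> U"
        and u3: "\<forall>V. openin (top_of_set M) V \<and> A \<subseteq> V \<longrightarrow> (\<exists>N. \<forall>n\<ge>N. (F ^^ n) ` U \<subseteq> V)"
      by auto
    show ?thesis
      by (rule that[OF cA AM u1 u2]) (use u3 in simp)
  qed
  have M1M: "M1 \<subseteq> M" using openin_imp_subset[OF M1o] by simp
  have "openin (top_of_set M) (U \<inter> M1)" by (rule openin_Int[OF Uo M1o])
  then obtain O2 where O2: "open O2" "U \<inter> M1 = M \<inter> O2" by (auto simp: openin_open)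
  have "A \<subseteq> O2" using AU AM1 AM O2 by auto
  then obtain e where e: "e > 0" "(\<Union>x\<in>A. ball x e) \<subseteq> O2"
    using compact_subset_open_imp_ball_epsilon_subset[OF cA O2(1)] by blast
  define r where "r = e/2"
  have r: "r > 0" using e by (simp add: r_def)
  define K0 where "K0 = {x\<in>M. infdist x A \<le> r}"
  have K0sub: "K0 \<subseteq> U \<inter> M1"
  proof
    fix x assume x: "x \<in> K0"
    obtain a where a: "a \<in> A" "infdist x A = dist x a"
      using infdist_attains_inf[OF compact_imp_closed[OF cA] Ane] by blast
    have "x \<in> ball a e" using a x e by (auto simp: K0_def r_def dist_commute)
    then have "x \<in> O2" using e a by blast
    then show "x \<in> U \<inter> M1" using x O2 by (auto simp: K0_def)
  qed
  have K0c: "compact K0" unfolding K0_def by (rule compact_infdist_le[OF Mc cA Ane])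
  have K0M: "K0 \<subseteq> M" by (auto simp: K0_def)
  define Vr where "Vr = {x\<in>M. \<exists>a\<in>A. dist x a < r}"
  have Vro: "openin (top_of_set M) Vr"
  proof -
    have "Vr = M \<inter> (\<Union>a\<in>A. ball a r)" by (auto simp: Vr_def dist_commute)
    then show ?thesis by (auto intro!: openin_open_Int)
  qed
  have AVr: "A \<subseteq> Vr" using AM r by (force simp: Vr_def)
  have VrK0: "Vr \<subseteq> K0" by (auto simp: Vr_def K0_def intro: order_trans[OF infdist_le] less_imp_le)
  define V2 where "V2 = {x\<in>M. \<exists>a\<in>A. dist x a < r/2}"
  have V2o: "openin (top_of_set M) V2"
  proof -
    have "V2 = M \<inter> (\<Union>a\<in>A. ball a (r/2))" by (auto simp: V2_def dist_commute)
    then show ?thesis by (auto intro!: openin_open_Int)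
  qed
  have AV2: "A \<subseteq> V2" using AM r by (force simp: V2_def)
  obtain N0 where N0: "\<forall>n\<ge>N0. (F^^n) ` U \<subseteq> V2" using conv[OF V2o AV2] by blast
  define N where "N = Suc N0"
  have FNU: "(F^^N) ` U \<subseteq> V2" using N0 unfolding N_def by (meson le_SucI order_refl)
  have Npos: "N > 0" by (simp add: N_def)
  define C where "C = (\<Union>j\<in>{..N}. (F^^j) ` K0)"
  have Cc: "compact C" unfolding C_def
  proof (rule compact_UN)
    fix j assume "j \<in> {..N}"
    show "compact ((F^^j) ` K0)"
    proof (rule compact_continuous_image[OF _ K0c])
      show "continuous_on K0 (F^^j)"
        using funpow_props[OF Fc FM, of j] K0M continuous_on_subset by blast
    qed
  qed simp
  have CM1: "C \<subseteq> M1" unfolding C_def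
  proof (rule UN_least)
    fix j show "(F^^j) ` K0 \<subseteq> M1" using K0sub funpow_inv[OF FM1, of j] by blast
  qed
  have CM: "C \<subseteq> M" using CM1 M1M by blast
  have Cne: "C \<noteq> {}" using Ane AVr VrK0 unfolding C_def by force
  have orbC: "\<forall>j\<le>N. (F^^j) y \<in> C" if "y \<in> K0" for y
    using that unfolding C_def by auto
  obtain O1 where O1: "open O1" "M1 = M \<inter> O1" using M1o by (auto simp: openin_open)
  have "C \<subseteq> O1" using CM1 O1 by auto
  then obtain m0 where m0: "m0 > 0" "(\<Union>x\<in>C. ball x m0) \<subseteq> O1"
    using compact_subset_open_imp_ball_epsilon_subset[OF Cc O1(1)] by blast
  have C'c: "compact {x\<in>M. infdist x C \<le> 1}" by (rule compact_infdist_le[OF Mc Cc Cne])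
  have uc: "uniformly_continuous_on {x\<in>M. infdist x C \<le> 1} F"
    by (rule compact_uniformly_continuous[OF continuous_on_subset[OF Fc] C'c]) auto
  define \<epsilon>0 where "\<epsilon>0 = min (min m0 (r/2)) 1"
  have "0 < \<epsilon>0" "\<epsilon>0 \<le> 1" using m0 r by (auto simp: \<epsilon>0_def)
  from chain_dev[OF uc CM this, of N] obtain \<eta> where \<eta>: "\<eta> > 0"
    "\<And>x. x 0 \<in> M \<Longrightarrow> (\<forall>j\<le>N. (F^^j) (x 0) \<in> C) \<Longrightarrow>
        (\<forall>j\<le>N. chn M F \<eta> j x \<longrightarrow> dist (x j) ((F^^j) (x 0)) < \<epsilon>0)" by blast
  define W where "W = {y. \<exists>x m. x 0 \<in> Vr \<and> chn M F \<eta> m x \<and> x m = y}"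
  have chM: "x m \<in> M" if "x 0 \<in> M" "chn M F \<eta> m x" for x m
  proof (cases m)
    case 0 then show ?thesis using that by simp
  next
    case (Suc k) then show ?thesis using that by (auto simp: chn_def)
  qed
  have key: "\<forall>x. x 0 \<in> Vr \<longrightarrow> chn M F \<eta> m x \<longrightarrow> x m \<in> M1" for m
  proof (induction m rule: less_induct)
    case (less m)
    show ?case
    proof (intro allI impI)
      fix x assume x0: "x 0 \<in> Vr" and ch: "chn M F \<eta> m x"
      have x0M: "x 0 \<in> M" and x0K: "x 0 \<in> K0" using x0 VrK0 by (auto simp: Vr_def)
      have orb: "\<forall>j\<le>N. (F^^j) (x 0) \<in> C" by (rule orbC[OF x0K])
      have xmM: "x m \<in> M" by (rule chM[OF x0M ch])
      show "x m \<in> M1"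
      proof (cases "m \<le> N")
        case True
        then have "dist (x m) ((F^^m) (x 0)) < \<epsilon>0" using \<eta>(2)[of x, OF x0M orb] ch by blast
        then have "x m \<in> ball ((F^^m) (x 0)) m0" by (auto simp: \<epsilon>0_def dist_commute)
        moreover have "(F^^m) (x 0) \<in> C" using orb True by blast
        ultimately have "x m \<in> O1" using m0 by blast
        then show ?thesis using xmM O1 by auto
      next
        case False
        have chN: "chn M F \<eta> N x" using ch False by (auto simp: chn_def)
        have d: "dist (x N) ((F^^N) (x 0)) < r/2" using \<eta>(2)[of x, OF x0M orb] chN by (auto simp: \<epsilon>0_def)
        have "x 0 \<in> U" using x0K K0sub by blast
        then have "(F^^N) (x 0) \<in> V2" using FNU by blast
        then obtain a where a: "a \<in> A" "dist ((F^^N) (x 0)) a < r/2" by (auto simp: V2_def)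
        have "dist (x N) a \<le> dist (x N) ((F^^N) (x 0)) + dist ((F^^N) (x 0)) a" by (rule dist_triangle)
        then have "dist (x N) a < r" using d a by linarith
        moreover have "x N \<in> M" by (rule chM[OF x0M chN])
        ultimately have xN: "x N \<in> Vr" using a by (auto simp: Vr_def)
        define x' where "x' = (\<lambda>i. x (i + N))"
        have ch': "chn M F \<eta> (m - N) x'" using ch False by (auto simp: chn_def x'_def)
        have "m - N < m" using False Npos by simp
        moreover have "x' 0 \<in> Vr" using xN by (simp add: x'_def)
        ultimately have "x' (m - N) \<in> M1" using less.IH ch' by blast
        then show ?thesis using False by (simp add: x'_def)
      qed
    qed
  qed
  have WM1: "W \<subseteq> M1" using key by (auto simp: W_def)
  have VrW: "Vr \<subseteq> W"
  proof
    fix y assume "y \<in> Vr"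
    then show "y \<in> W" unfolding W_def
      by (intro CollectI exI[of _ "\<lambda>_. y"] exI[of _ 0]) (auto simp: chn_def)
  qed
  have clos: "y \<in> W" if x: "x \<in> W" and y: "y \<in> M" "dist y (F x) < \<eta>" for x y
  proof -
    obtain z m where z: "z 0 \<in> Vr" "chn M F \<eta> m z" "z m = x" using x by (auto simp: W_def)
    define z' where "z' = z(Suc m := y)"
    have "z' 0 \<in> Vr" using z by (simp add: z'_def)
    moreover have "chn M F \<eta> (Suc m) z'"
      using z y by (auto simp: chn_def z'_def less_Suc_eq)
    moreover have "z' (Suc m) = y" by (simp add: z'_def)
    ultimately show ?thesis unfolding W_def by blast
  qed
  have Weq: "W = Vr \<union> (\<Union>x\<in>W. M \<inter> ball (F x) \<eta>)"
  proof
    show "W \<subseteq> Vr \<union> (\<Union>x\<in>W. M \<inter> ball (F x) \<eta>)"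
    proof
      fix y assume "y \<in> W"
      then obtain z m where z: "z 0 \<in> Vr" "chn M F \<eta> m z" "z m = y" by (auto simp: W_def)
      show "y \<in> Vr \<union> (\<Union>x\<in>W. M \<inter> ball (F x) \<eta>)"
      proof (cases m)
        case 0 then show ?thesis using z by simp
      next
        case (Suc k)
        have "chn M F \<eta> k z" using z Suc by (auto simp: chn_def)
        then have "z k \<in> W" using z unfolding W_def by blast
        moreover have "y \<in> M \<inter> ball (F (z k)) \<eta>" using z Suc by (auto simp: chn_def dist_commute)
        ultimately show ?thesis by blast
      qed
    qed
  next
    show "Vr \<union> (\<Union>x\<in>W. M \<inter> ball (F x) \<eta>) \<subseteq> W"
      using VrW clos by (auto simp: dist_commute)
  qed
  have Wo: "openin (top_of_set M) W"
  proof -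
    have o1: "openin (top_of_set M) (M \<inter> ball (F x) \<eta>)" for x
      by (rule openin_open_Int) simp
    have "openin (top_of_set M) (\<Union>x\<in>W. M \<inter> ball (F x) \<eta>)"
      by (rule openin_Union) (use o1 in force)
    then have "openin (top_of_set M) (Vr \<union> (\<Union>x\<in>W. M \<inter> ball (F x) \<eta>))"
      by (rule openin_Un[OF Vro])
    then show ?thesis unfolding Weq[symmetric] .
  qed
  have AW: "A \<subseteq> W" using AVr VrW by (rule subset_trans)
  show ?thesis
    by (rule exI[of _ \<eta>], intro conjI \<eta>(1) exI[of _ W]) (use Wo AW WM1 clos in auto)
qed

lemma set_integral_upper:
  fixes \<nu> :: "'a measure" and g :: "'a \<Rightarrow> real"
  assumes fm: "finite_measure \<nu>" and gm: "g \<in> borel_measurable \<nu>"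
    and gb: "\<And>x. x \<in> space \<nu> \<Longrightarrow> 0 \<le> g x \<and> g x \<le> 1"
    and T: "T \<in> sets \<nu>" and S: "S \<in> sets \<nu>" and ST: "S \<subseteq> T"
    and c: "\<And>x. x \<in> S \<Longrightarrow> g x \<le> c"
  shows "(LINT x:T|\<nu>. g x) \<le> measure \<nu> T - (1 - c) * measure \<nu> S"
proof -
  interpret finite_measure \<nu> by (rule fm)
  have iT: "integrable \<nu> (indicator T :: _ \<Rightarrow> real)"
    using T by (intro integrable_real_indicator) (auto simp: less_top[symmetric])
  have iS: "integrable \<nu> (indicator S :: _ \<Rightarrow> real)"
    using S by (intro integrable_real_indicator) (auto simp: less_top[symmetric])
  have i1: "integrable \<nu> (\<lambda>x. indicator T x - (1 - c) * indicator S x)"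
    using iT iS by auto
  have i2: "integrable \<nu> (\<lambda>x. indicator T x *\<^sub>R g x)"
  proof (rule integrable_const_bound[where B=1])
    show "(\<lambda>x. indicator T x *\<^sub>R g x) \<in> borel_measurable \<nu>"
      using T gm by (intro borel_measurable_scaleR borel_measurable_indicator) auto
    show "AE x in \<nu>. norm (indicator T x *\<^sub>R g x) \<le> 1"
      using gb by (auto simp: indicator_def)
  qed
  have "(\<integral>x. indicator T x *\<^sub>R g x \<partial>\<nu>) \<le> (\<integral>x. indicator T x - (1 - c) * indicator S x \<partial>\<nu>)"
  proof (rule integral_mono[OF i2 i1])
    fix x assume x: "x \<in> space \<nu>"
    show "indicator T x *\<^sub>R g x \<le> indicator T x - (1 - c) * indicator S x"
      using c[of x] gb[OF x] ST by (auto simp: indicator_def)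
  qed
  also have "\<dots> = measure \<nu> T - (1 - c) * measure \<nu> S"
    using iT iS sets.sets_into_space[OF S] sets.sets_into_space[OF T]
    by (simp add: Int_absorb2)
  finally show ?thesis by (simp add: set_lebesgue_integral_def)
qed

theorem mainTheorem7:
  fixes M M0 M1 :: "'a::euclidean_space set"
    and F :: "'a \<Rightarrow> 'a"
    and K :: "real \<Rightarrow> 'a \<Rightarrow> 'a measure"
    and eps lam :: "nat \<Rightarrow> real"
    and \<mu>s :: "nat \<Rightarrow> 'a measure" and \<mu> :: "'a measure"
  assumes M_closed: "closed M"
    and F_cont: "continuous_on M F" and F_maps: "F ` M \<subseteq> M" and F_bdd: "bounded (F ` M)"
    and K_prob: "\<And>\<epsilon> x. \<epsilon> > 0 \<Longrightarrow> x \<in> M \<Longrightarrow>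
                    prob_space (K \<epsilon> x) \<and> sets (K \<epsilon> x) = sets (restrict_space borel M)"
    and K_meas: "\<And>\<epsilon> \<Gamma>. \<epsilon> > 0 \<Longrightarrow> \<Gamma> \<in> sets (restrict_space borel M) \<Longrightarrow>
                    (\<lambda>x. measure (K \<epsilon> x) \<Gamma>) \<in> borel_measurable (restrict_space borel M)"
    and SH1: "\<And>\<delta>. \<delta> > 0 \<Longrightarrow> ((\<lambda>\<epsilon>. beta M F K \<delta> \<epsilon>) \<longlongrightarrow> 0) (at_right 0)"
    and SH2_M0: "M0 \<subseteq> M" "closed M0" and SH2_M1: "M1 = M - M0"
    and SH2_inv0: "F ` M0 \<subseteq> M0" and SH2_inv1: "F ` M1 \<subseteq> M1"
    and SH2_abs: "\<And>\<epsilon> x. \<epsilon> > 0 \<Longrightarrow> x \<in> M0 \<Longrightarrow> measure (K \<epsilon> x) M1 = 0"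
    and eps_pos: "\<And>n. eps n > 0" and eps_dec: "decseq eps" and eps_lim: "eps \<longlonglongrightarrow> 0"
    and qsd: "\<And>n. QSD M M1 (K (eps n)) (\<mu>s n) (lam n)"
    and mu_prob: "prob_space \<mu>" and mu_sets: "sets \<mu> = sets (restrict_space borel M)"
    and weak: "weak_conv_on M \<mu>s \<mu>"
  shows
    "(liminf (\<lambda>n. ereal (lam n)) \<ge> ereal (measure \<mu> M1))
     \<and> (measure \<mu> M1 = 1 \<longrightarrow> lam \<longlonglongrightarrow> 1)
     \<and> (lam \<longlonglongrightarrow> 0 \<longrightarrow> measure \<mu> M0 = 1)
     \<and> (\<forall>A. attractor M F A \<and> A \<subseteq> M1 \<and>
            (\<forall>n U. openin (top_of_set M) U \<and> A \<subseteq> U \<longrightarrow> measure (\<mu>s n) U > 0)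
          \<longrightarrow> (\<exists>\<delta>>0. \<forall>n. lam n \<ge> 1 - beta M F K \<delta> (eps n))
            \<and> (\<forall>\<delta>>0. (\<forall>n. lam n \<ge> 1 - beta M F K \<delta> (eps n)) \<longrightarrow>
                 (\<forall>V0. openin (top_of_set M) V0 \<and> M0 \<subseteq> V0
                    \<and> eventually (\<lambda>n. (INF x\<in>V0. measure (K (eps n) x) M0) > 0) sequentially
                    \<and> (\<lambda>n. beta M F K \<delta> (eps n) / (INF x\<in>V0. measure (K (eps n) x) M0)) \<longlonglongrightarrow> 0
                  \<longrightarrow> measure \<mu> V0 = 0)))"
proof -
  define R where "R = restrict_space borel M"
  have sR: "sets R = (\<inter>) M ` sets borel" unfolding R_def by (rule sets_restrict_space)
  have openinR: "S \<in> sets R" if So: "openin (top_of_set M) S" for S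
  proof -
    obtain Og where "open Og" "S = M \<inter> Og" using So by (auto simp: openin_open)
    then show ?thesis unfolding sR by auto
  qed
  have spn: "space (\<mu>s n) = M" for n
    using sets_eq_imp_space_eq[of "\<mu>s n" R] qsd[of n] by (simp add: QSD_def R_def space_restrict_space)
  have psn: "prob_space (\<mu>s n)" and ssn: "sets (\<mu>s n) = sets R" for n
    using qsd[of n] by (auto simp: QSD_def R_def)
  have sp: "space \<mu> = M"
    using sets_eq_imp_space_eq[OF mu_sets] by (simp add: space_restrict_space)
  have M0R: "M0 \<in> sets R" using SH2_M0 unfolding sR by (auto intro!: image_eqI[of _ _ M0])
  have M1R: "M1 \<in> sets R"
  proof -
    have "M1 = M \<inter> (- M0)" using SH2_M1 by auto
    then show ?thesis unfolding sR using SH2_M0 by auto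
  qed
  have M1M: "M1 \<subseteq> M" using SH2_M1 by auto
  have Kp: "prob_space (K (eps n) x)" and Ks: "sets (K (eps n) x) = sets R"
    and Ksp: "space (K (eps n) x) = M" if "x \<in> M" for n x
  proof -
    show "prob_space (K (eps n) x)" "sets (K (eps n) x) = sets R"
      using K_prob[OF eps_pos that] by (auto simp: R_def)
    then show "space (K (eps n) x) = M"
      using sets_eq_imp_space_eq[of "K (eps n) x" R] by (simp add: R_def space_restrict_space)
  qed
  have Kle1: "measure (K (eps n) x) G \<le> 1" if "x \<in> M" for n x G
    using prob_space.prob_le_1[OF Kp[OF that]] .
  have Kmeas: "(\<lambda>x. measure (K (eps n) x) G) \<in> borel_measurable (\<mu>s n)" if "G \<in> sets R" for n G
    using K_meas[OF eps_pos, of G n] that by (simp add: measurable_cong_sets[OF ssn refl] R_def)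
  have fmn: "finite_measure (\<mu>s n)" for n using prob_space.finite_measure[OF psn] .
  have gb: "0 \<le> measure (K (eps n) x) G \<and> measure (K (eps n) x) G \<le> 1" if "x \<in> space (\<mu>s n)" for n x G
    using Kle1[of x n G] that spn by auto
  have qsdeq: "(LINT x:M1|\<mu>s n. measure (K (eps n) x) G) = lam n * measure (\<mu>s n) G"
    if "G \<in> sets R" "G \<subseteq> M1" for n G
    using qsd[of n] that by (auto simp: QSD_def R_def)
  have mun1: "measure (\<mu>s n) M1 = 1" for n using qsd[of n] by (simp add: QSD_def)
  have lam01: "0 < lam n" "lam n < 1" for n using qsd[of n] by (auto simp: QSD_def)
  have lamM1: "(LINT x:M1|\<mu>s n. measure (K (eps n) x) M1) = lam n" for n
    using qsdeq[OF M1R order_refl, of n] mun1 by simp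
  have Mne: "M \<noteq> {}" using prob_space.not_empty[OF mu_prob] sp by simp
  have M0ne: "M0 \<noteq> {}"
  proof
    assume "M0 = {}"
    then have "M1 = M" using SH2_M1 by simp
    have "1 * measure (\<mu>s 0) M1 \<le> (LINT x:M1|\<mu>s 0. measure (K (eps 0) x) M1)"
    proof (rule set_integral_lower[OF fmn Kmeas[OF M1R] gb _ _ order_refl])
      show "M1 \<in> sets (\<mu>s 0)" using M1R ssn by simp
      show "M1 \<in> sets (\<mu>s 0)" using M1R ssn by simp
      fix x assume "x \<in> M1"
      then have "x \<in> M" using M1M by auto
      then show "1 \<le> measure (K (eps 0) x) M1"
        using prob_space.prob_space[OF Kp[OF \<open>x \<in> M\<close>]] Ksp[OF \<open>x \<in> M\<close>] \<open>M1 = M\<close> by simp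
    qed
    then show False using lamM1[of 0] mun1[of 0] lam01[of 0] by simp
  qed
  have bdd: "bdd_above ((\<lambda>x. measure (K (eps n) x) (M - nbhd M \<delta> {F x})) ` M)" for n \<delta>
    using Kle1 by (intro bdd_aboveI[where M=1]) auto
  have beta_ge: "measure (K (eps n) x) (M - nbhd M \<delta> {F x}) \<le> beta M F K \<delta> (eps n)"
    if "x \<in> M" for n \<delta> x
    unfolding beta_def by (rule cSUP_upper[OF that bdd])
  have beta_nonneg: "0 \<le> beta M F K \<delta> (eps n)" for n \<delta>
  proof -
    obtain x where "x \<in> M" using Mne by auto
    then show ?thesis using beta_ge[of x n \<delta>] measure_nonneg[of "K (eps n) x" "M - nbhd M \<delta> {F x}"] by linarith
  qed
  have nbhdR: "nbhd M \<delta> {F x} \<in> sets R" for \<delta> x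
  proof -
    have "nbhd M \<delta> {F x} = M \<inter> ball (F x) \<delta>" by (auto simp: nbhd_def dist_commute)
    then show ?thesis unfolding sR by auto
  qed
  have pnb: "1 - beta M F K \<delta> (eps n) \<le> measure (K (eps n) x) G"
    if x: "x \<in> M" and G: "G \<in> sets R" "nbhd M \<delta> {F x} \<subseteq> G" for n \<delta> x G
  proof -
    interpret Kx: prob_space "K (eps n) x" by (rule Kp[OF x])
    have "measure (K (eps n) x) (M - nbhd M \<delta> {F x}) = 1 - measure (K (eps n) x) (nbhd M \<delta> {F x})"
      using Kx.prob_compl[of "nbhd M \<delta> {F x}"] nbhdR Ks[OF x] Ksp[OF x] by simp
    moreover have "measure (K (eps n) x) (nbhd M \<delta> {F x}) \<le> measure (K (eps n) x) G"
      using Kx.finite_measure_mono[OF G(2)] G(1) Ks[OF x] by simp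
    ultimately show ?thesis using beta_ge[OF x, of n \<delta>] by linarith
  qed
  have epsf: "filterlim eps (at_right 0) sequentially"
    by (rule filterlim_at_withinI[OF eps_lim]) (use eps_pos in auto)
  have beta_lim: "(\<lambda>n. beta M F K \<delta> (eps n)) \<longlonglongrightarrow> 0" if "\<delta> > 0" for \<delta>
    using filterlim_compose[OF SH1[OF that] epsf] by (simp add: o_def)
  have port: "eventually (\<lambda>n. measure \<mu> G - e < measure (\<mu>s n) G) sequentially"
    if "openin (top_of_set M) G" "e > 0" for G e
    by (rule portmanteau_open[OF M_closed weak psn ssn[unfolded R_def] mu_prob mu_sets that])
  have PA: "ereal (measure \<mu> M1) \<le> liminf (\<lambda>n. ereal (lam n))"
  proof -
    define G where "G k = {x\<in>M. 1 / real (Suc k) < infdist (F x) M0}" for k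
    have Gopen: "openin (top_of_set M) (G k)" for k
    proof -
      have "continuous_on M (\<lambda>x. infdist (F x) M0)" by (intro continuous_on_infdist F_cont)
      then have "openin (top_of_set M) (M \<inter> (\<lambda>x. infdist (F x) M0) -` {1/real (Suc k)<..})"
        by (rule continuous_openin_preimage_gen) simp
      moreover have "M \<inter> (\<lambda>x. infdist (F x) M0) -` {1/real (Suc k)<..} = G k" by (auto simp: G_def)
      ultimately show ?thesis by simp
    qed
    have GR: "G k \<in> sets R" for k using openinR[OF Gopen] .
    have GM1: "G k \<subseteq> M1" for k
    proof
      fix x assume x: "x \<in> G k"
      have pos: "0 < infdist (F x) M0" using x unfolding G_def
        by (metis (no_types, lifting) mem_Collect_eq of_nat_0_less_iff zero_less_Suc zero_less_divide_1_iff order_less_trans)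
      have "x \<notin> M0"
      proof
        assume "x \<in> M0" then have "F x \<in> M0" using SH2_inv0 by auto
        then show False using pos by simp
      qed
      then show "x \<in> M1" using x SH2_M1 by (auto simp: G_def)
    qed
    have Gnb: "nbhd M (1 / real (Suc k)) {F x} \<subseteq> M1" if x: "x \<in> G k" for x k
    proof
      fix y assume y: "y \<in> nbhd M (1 / real (Suc k)) {F x}"
      then have yM: "y \<in> M" and dy: "dist y (F x) < 1 / real (Suc k)" by (auto simp: nbhd_def)
      have "y \<notin> M0"
      proof
        assume "y \<in> M0"
        then have "infdist (F x) M0 \<le> dist (F x) y" by (rule infdist_le)
        then show False using dy x by (auto simp: G_def dist_commute)
      qed
      then show "y \<in> M1" using yM SH2_M1 by auto
    qed
    have lamlow: "measure (\<mu>s n) (G k) - beta M F K (1 / real (Suc k)) (eps n) \<le> lam n" for n k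
    proof -
      define b where "b = beta M F K (1 / real (Suc k)) (eps n)"
      have "(1 - b) * measure (\<mu>s n) (G k) \<le> (LINT x:M1|\<mu>s n. measure (K (eps n) x) M1)"
      proof (rule set_integral_lower[OF fmn Kmeas[OF M1R] gb _ _ GM1])
        show "M1 \<in> sets (\<mu>s n)" using M1R ssn by simp
        show "G k \<in> sets (\<mu>s n)" using GR ssn by simp
        fix x assume x: "x \<in> G k"
        then have xM: "x \<in> M" by (auto simp: G_def)
        show "1 - b \<le> measure (K (eps n) x) M1"
          unfolding b_def by (rule pnb[OF xM M1R Gnb[OF x]])
      qed
      then have "(1 - b) * measure (\<mu>s n) (G k) \<le> lam n" using lamM1 by simp
      moreover have "b * measure (\<mu>s n) (G k) \<le> b"
        using beta_nonneg[of "1 / real (Suc k)" n] prob_space.prob_le_1[OF psn[of n]]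
        unfolding b_def by (simp add: mult_left_le)
      ultimately show ?thesis unfolding b_def[symmetric] by (simp add: algebra_simps)
    qed
    have incG: "incseq G"
    proof (rule incseq_SucI)
      fix k
      have "1 / real (Suc (Suc k)) \<le> 1 / real (Suc k)" by (simp add: frac_le)
      then show "G k \<subseteq> G (Suc k)" by (auto simp: G_def)
    qed
    have M1U: "M1 \<subseteq> (\<Union>k. G k)"
    proof
      fix x assume x: "x \<in> M1"
      then have xM: "x \<in> M" using M1M by auto
      have "F x \<in> M1" using x SH2_inv1 by auto
      then have "F x \<notin> M0" using SH2_M1 by auto
      then have pos: "0 < infdist (F x) M0" by (rule infdist_pos_not_in_closed[OF SH2_M0(2) M0ne])
      obtain m :: nat where m: "m > 0" "inverse (real m) < infdist (F x) M0"
        using ex_inverse_of_nat_less[OF pos] by auto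
      have "1 / real (Suc (m - 1)) < infdist (F x) M0" using m by (simp add: inverse_eq_divide)
      then show "x \<in> (\<Union>k. G k)" using xM by (auto simp: G_def)
    qed
    have GRm: "range G \<subseteq> sets \<mu>" using GR mu_sets by (auto simp: R_def)
    have URm: "(\<Union>k. G k) \<in> sets \<mu>" using GRm by auto
    interpret mu: prob_space \<mu> by (rule mu_prob)
    have limG: "(\<lambda>k. measure \<mu> (G k)) \<longlonglongrightarrow> measure \<mu> (\<Union>k. G k)"
      by (rule mu.finite_Lim_measure_incseq[OF GRm incG])
    have M1le: "measure \<mu> M1 \<le> measure \<mu> (\<Union>k. G k)"
      by (rule mu.finite_measure_mono[OF M1U URm])
    show ?thesis
      unfolding le_Liminf_iff
    proof (intro allI impI)
      fix y :: ereal assume y: "y < ereal (measure \<mu> M1)"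
      show "eventually (\<lambda>n. y < ereal (lam n)) sequentially"
      proof (cases y)
        case (real t)
        define g where "g = measure \<mu> M1 - t"
        have g: "g > 0" using y real by (simp add: g_def)
        have "eventually (\<lambda>k. measure \<mu> (\<Union>k. G k) - g/3 < measure \<mu> (G k)) sequentially"
          using g by (intro order_tendstoD(1)[OF limG]) simp
        then obtain k where k: "measure \<mu> (\<Union>k. G k) - g/3 < measure \<mu> (G k)"
          using eventually_sequentially by auto
        have e1: "eventually (\<lambda>n. measure \<mu> (G k) - g/3 < measure (\<mu>s n) (G k)) sequentially"
          using g by (intro port Gopen) simp
        have e2: "eventually (\<lambda>n. beta M F K (1 / real (Suc k)) (eps n) < g/3) sequentially"
          using g by (intro order_tendstoD(2)[OF beta_lim]) simp_all
        show ?thesis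
          using e1 e2
        proof eventually_elim
          case (elim n)
          have "t < lam n" using elim k lamlow[of n k] M1le g_def by linarith
          then show ?case using real by simp
        qed
      next
        case PInf then show ?thesis using y by simp
      next
        case MInf then show ?thesis by simp
      qed
    qed
  qed
  have PA2: "measure \<mu> M1 = 1 \<longrightarrow> lam \<longlonglongrightarrow> 1"
  proof
    assume h: "measure \<mu> M1 = 1"
    have ev: "\<forall>y<ereal (measure \<mu> M1). eventually (\<lambda>n. y < ereal (lam n)) sequentially"
      using le_Liminf_iff[THEN iffD1, OF PA] .
    show "lam \<longlonglongrightarrow> 1"
    proof (rule order_tendstoI)
      fix a :: real assume a: "a < 1"
      then have "ereal a < ereal (measure \<mu> M1)" using h by simp
      then have "eventually (\<lambda>n. ereal a < ereal (lam n)) sequentially" using ev by blast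
      then show "eventually (\<lambda>n. a < lam n) sequentially" by simp
    next
      fix a :: real assume a: "1 < a"
      show "eventually (\<lambda>n. lam n < a) sequentially"
        using a lam01 by (intro always_eventually allI) (meson order_less_trans)
    qed
  qed
  have PA3: "lam \<longlonglongrightarrow> 0 \<longrightarrow> measure \<mu> M0 = 1"
  proof
    assume h: "lam \<longlonglongrightarrow> 0"
    have "liminf (\<lambda>n. ereal (lam n)) = ereal 0"
      by (rule lim_imp_Liminf) (use h in \<open>simp_all add: tendsto_ereal\<close>)
    then have "measure \<mu> M1 \<le> 0" using PA by simp
    moreover have "measure \<mu> M1 = 1 - measure \<mu> M0"
    proof -
      have "M0 \<in> sets \<mu>" using M0R mu_sets by (simp add: R_def)
      then have "measure \<mu> (space \<mu> - M0) = 1 - measure \<mu> M0"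
        by (rule prob_space.prob_compl[OF mu_prob])
      moreover have "space \<mu> - M0 = M1" using sp SH2_M1 by simp
      ultimately show ?thesis by simp
    qed
    ultimately show "measure \<mu> M0 = 1" using measure_nonneg[of \<mu> M1] by linarith
  qed
  have M1o: "openin (top_of_set M) M1"
  proof -
    have "M1 = M \<inter> (- M0)" using SH2_M1 by auto
    then show ?thesis using SH2_M0(2) by (simp add: openin_open_Int open_Compl)
  qed
  have PB: "\<exists>\<delta>>0. \<forall>n. lam n \<ge> 1 - beta M F K \<delta> (eps n)"
    if att: "attractor M F A" and AM1: "A \<subseteq> M1"
      and pos: "\<forall>n U. openin (top_of_set M) U \<and> A \<subseteq> U \<longrightarrow> measure (\<mu>s n) U > 0" for A
  proof -
    have Ane: "A \<noteq> {}"
    proof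
      assume "A = {}"
      then have "measure (\<mu>s 0) {} > 0" using pos[rule_format, of "{}" 0] by simp
      then show False by simp
    qed
    obtain \<eta> W where \<eta>: "\<eta> > 0" and Wo: "openin (top_of_set M) W" and AW: "A \<subseteq> W"
      and WM1: "W \<subseteq> M1" and clos: "\<forall>x\<in>W. \<forall>y\<in>M. dist y (F x) < \<eta> \<longrightarrow> y \<in> W"
      using trapping[OF M_closed F_cont F_maps M1o SH2_inv1 att AM1 Ane] by blast
    have WR: "W \<in> sets R" by (rule openinR[OF Wo])
    have WM: "W \<subseteq> M" using WM1 M1M by auto
    show ?thesis
    proof (intro exI[of _ \<eta>] conjI allI \<eta>)
      fix n
      define b where "b = beta M F K \<eta> (eps n)"
      have pW: "measure (\<mu>s n) W > 0" using pos Wo AW by blast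
      have "(1 - b) * measure (\<mu>s n) W \<le> (LINT x:M1|\<mu>s n. measure (K (eps n) x) W)"
      proof (rule set_integral_lower[OF fmn Kmeas[OF WR] gb _ _ WM1])
        show "M1 \<in> sets (\<mu>s n)" using M1R ssn by simp
        show "W \<in> sets (\<mu>s n)" using WR ssn by simp
        fix x assume x: "x \<in> W"
        then have xM: "x \<in> M" using WM by auto
        have "nbhd M \<eta> {F x} \<subseteq> W" using clos x by (auto simp: nbhd_def)
        then show "1 - b \<le> measure (K (eps n) x) W"
          unfolding b_def by (rule pnb[OF xM WR])
      qed
      also have "\<dots> = lam n * measure (\<mu>s n) W" by (rule qsdeq[OF WR WM1])
      finally show "1 - beta M F K \<eta> (eps n) \<le> lam n"
        using pW unfolding b_def by (simp add: mult_le_cancel_right)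
    qed
  qed
  have PB2: "measure \<mu> V0 = 0"
    if "\<delta> > 0" and hb: "\<forall>n. lam n \<ge> 1 - beta M F K \<delta> (eps n)"
      and V0: "openin (top_of_set M) V0" "M0 \<subseteq> V0"
      and evpos: "eventually (\<lambda>n. (INF x\<in>V0. measure (K (eps n) x) M0) > 0) sequentially"
      and rat: "(\<lambda>n. beta M F K \<delta> (eps n) / (INF x\<in>V0. measure (K (eps n) x) M0)) \<longlonglongrightarrow> 0"
    for \<delta> V0
  proof -
    define I where "I n = (INF x\<in>V0. measure (K (eps n) x) M0)" for n
    have V0M: "V0 \<subseteq> M" using openin_imp_subset[OF V0(1)] by simp
    have V0R: "V0 \<in> sets R" by (rule openinR[OF V0(1)])
    have V0ne: "V0 \<noteq> {}" using V0(2) M0ne by auto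
    have Ile: "I n \<le> measure (K (eps n) x) M0" if "x \<in> V0" for n x
      unfolding I_def by (rule cINF_lower[OF _ that]) (intro bdd_belowI[where m=0], auto)
    have Inn: "0 \<le> I n" for n
      unfolding I_def by (rule cINF_greatest[OF V0ne]) simp
    have bound: "I n * measure (\<mu>s n) V0 \<le> beta M F K \<delta> (eps n)" for n
    proof -
      interpret pn: prob_space "\<mu>s n" by (rule psn)
      have V0M1R: "V0 \<inter> M1 \<in> sets R" using V0R M1R by auto
      have "(LINT x:M1|\<mu>s n. measure (K (eps n) x) M1)
          \<le> measure (\<mu>s n) M1 - (1 - (1 - I n)) * measure (\<mu>s n) (V0 \<inter> M1)"
      proof (rule set_integral_upper[OF fmn Kmeas[OF M1R] gb])
        show "M1 \<in> sets (\<mu>s n)" using M1R ssn by simp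
        show "V0 \<inter> M1 \<in> sets (\<mu>s n)" using V0M1R ssn by simp
        show "V0 \<inter> M1 \<subseteq> M1" by simp
        fix x assume x: "x \<in> V0 \<inter> M1"
        then have xM: "x \<in> M" using V0M by auto
        have "measure (K (eps n) x) (space (K (eps n) x) - M0) = 1 - measure (K (eps n) x) M0"
          using prob_space.prob_compl[OF Kp[OF xM], of M0] M0R Ks[OF xM] by simp
        moreover have "space (K (eps n) x) - M0 = M1" using Ksp[OF xM] SH2_M1 by simp
        ultimately show "measure (K (eps n) x) M1 \<le> 1 - I n" using Ile[of x n] x by simp
      qed
      then have l1: "lam n \<le> 1 - I n * measure (\<mu>s n) (V0 \<inter> M1)" using lamM1 mun1 by simp
      have M0z: "measure (\<mu>s n) M0 = 0"
      proof -
        have "measure (\<mu>s n) (space (\<mu>s n) - M0) = 1 - measure (\<mu>s n) M0"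
          using pn.prob_compl[of M0] M0R ssn by simp
        moreover have "space (\<mu>s n) - M0 = M1" using spn SH2_M1 by simp
        ultimately show ?thesis using mun1[of n] by simp
      qed
      have "measure (\<mu>s n) V0 \<le> measure (\<mu>s n) ((V0 \<inter> M1) \<union> M0)"
        using V0M SH2_M1 V0M1R M0R ssn by (intro pn.finite_measure_mono) auto
      also have "\<dots> \<le> measure (\<mu>s n) (V0 \<inter> M1) + measure (\<mu>s n) M0"
        using V0M1R M0R ssn by (intro measure_Un_le) auto
      finally have "measure (\<mu>s n) V0 \<le> measure (\<mu>s n) (V0 \<inter> M1)" using M0z by simp
      then have "I n * measure (\<mu>s n) V0 \<le> I n * measure (\<mu>s n) (V0 \<inter> M1)"
        using Inn by (simp add: mult_left_mono)
      also have "\<dots> \<le> 1 - lam n" using l1 by linarith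
      also have "\<dots> \<le> beta M F K \<delta> (eps n)" using hb[rule_format, of n] by linarith
      finally show ?thesis .
    qed
    have "measure \<mu> V0 \<le> 0 + e" if e: "e > 0" for e
    proof -
      have e1: "eventually (\<lambda>n. measure \<mu> V0 - e/2 < measure (\<mu>s n) V0) sequentially"
        using e by (intro port V0(1)) simp
      have e2: "eventually (\<lambda>n. beta M F K \<delta> (eps n) / I n < e/2) sequentially"
        using e by (intro order_tendstoD(2)[OF rat[folded I_def]]) simp
      have e3: "eventually (\<lambda>n. I n > 0) sequentially" using evpos by (simp add: I_def)
      have "eventually (\<lambda>n. measure \<mu> V0 - e/2 < measure (\<mu>s n) V0 \<and>
               beta M F K \<delta> (eps n) / I n < e/2 \<and> I n > 0) sequentially"
        using e1 e2 e3 by (intro eventually_conj)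
      then obtain n where n: "measure \<mu> V0 - e/2 < measure (\<mu>s n) V0"
          "beta M F K \<delta> (eps n) / I n < e/2" "I n > 0"
        using eventually_sequentially by auto
      have "measure (\<mu>s n) V0 \<le> beta M F K \<delta> (eps n) / I n"
        using bound[of n] n(3) by (simp add: pos_le_divide_eq mult.commute)
      then show ?thesis using n by linarith
    qed
    then have "measure \<mu> V0 \<le> 0" by (rule field_le_epsilon)
    then show ?thesis using measure_nonneg[of \<mu> V0] by linarith
  qed
  show ?thesis
  proof (intro conjI PA PA2 PA3 allI impI)
    fix A assume h: "attractor M F A \<and> A \<subseteq> M1 \<and>
            (\<forall>n U. openin (top_of_set M) U \<and> A \<subseteq> U \<longrightarrow> measure (\<mu>s n) U > 0)"
    show "\<exists>\<delta>>0. \<forall>n. lam n \<ge> 1 - beta M F K \<delta> (eps n)"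
      by (rule PB[of A]) (use h in simp_all)
    fix \<delta> V0 assume d: "\<delta> > 0" and hb: "\<forall>n. lam n \<ge> 1 - beta M F K \<delta> (eps n)"
      and hv: "openin (top_of_set M) V0 \<and> M0 \<subseteq> V0
                    \<and> eventually (\<lambda>n. (INF x\<in>V0. measure (K (eps n) x) M0) > 0) sequentially
                    \<and> (\<lambda>n. beta M F K \<delta> (eps n) / (INF x\<in>V0. measure (K (eps n) x) M0)) \<longlonglongrightarrow> 0"
    show "measure \<mu> V0 = 0"
      by (rule PB2[OF d hb]) (use hv in simp_all)
  qed
qed

end
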